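(* Let $\Pi$ be a tight $\mathrm{LP}^{\mathrm{MLN}}$ program such that $\mathrm{SM}'[\Pi]$ is not empty. Then $\Pi$ (under the $\mathrm{LP}^{\mathrm{MLN}}$ semantics) and its completion $\mathit{Comp}(\Pi)$ (under the MLN semantics) have the same probability distribution over all interpretations, i.e. $P_\Pi(I)=P_{\mathit{Comp}(\Pi)}(I)$ for every interpretation $I$.
   Context: Signature $\sigma$ with no function constants of positive arity; interpretations are sets of ground atoms. A formula is negative if every occurrence of every atom is in the scope of negation. A rule has the form $A\leftarrow B\wedge N$ ($A$ a possibly empty disjunction of atoms $A_1\vee\dots\vee A_k$, $B$ a conjunction of atoms, $N$ a negative formula; $B\wedge N$ is its body), identified with $B\wedge N\rightarrow A$. For a ground program $\Pi$, the reduct $\Pi^I$ consists of $A\leftarrow B$ for rules $A\leftarrow B\wedge N$ with $I\models N$; $I$ is a stable model of $\Pi$ if it is a minimal model of $\Pi^I$. An $\mathrm{LP}^{\mathrm{MLN}}$ program $\Pi$ is a finite set of weighted rules $w:R$ ($w$ real, soft, or the symbol $\alpha$, hard), identified with its ground instance. $\overline{\Pi}$ drops weights; $\Pi_I=\{w:R\in\Pi\mid I\models R\}$; $\Pi^{\rm hard},\Pi^{\rm soft}$ are its hard and soft rules. $\mathrm{SM}[\Pi]=\{I\mid I$ stable model of $\overline{\Pi_I}\}$; $W_\Pi(I)=\exp(\sum_{w:R\in\Pi_I}w)$ if $I\in\mathrm{SM}[\Pi]$, else $0$; $P_\Pi(I)=\lim_{\alpha\to\infty}W_\Pi(I)/\sum_{J\in\mathrm{SM}[\Pi]}W_\Pi(J)$.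 $\mathrm{SM}'[\Pi]$ is the set of $I$ that are stable models of $\overline{\Pi_I}$ and satisfy $\overline{\Pi^{\rm hard}}$. $\Pi$ is tight if the positive dependency graph of $\overline{\Pi}$ (vertices: ground atoms; an edge from each atom in $A$ to each atom in $B$ for every rule $A\leftarrow B\wedge N$) is acyclic. An MLN is a finite set of weighted formulas $w:F$ ($w$ real or $\alpha$); $W_{\mathbb{L}}(I)=\exp(\sum w)$ over the formulas of $\mathbb{L}$ satisfied by $I$, and $P_{\mathbb{L}}(I)=\lim_{\alpha\to\infty}W_{\mathbb{L}}(I)/\sum_J W_{\mathbb{L}}(J)$ over all interpretations $J$. $\mathit{Comp}(\Pi)$ is the MLN consisting of all $w:R$ in $\Pi$ (with $R$ read as the formula $B\wedge N\rightarrow A$) together with, for each ground atom $A$, the hard formula $\alpha:\ A\rightarrow\bigvee (\mathit{Body}\wedge\bigwedge_{A'\in\{A_1,\dots,A_k\}\setminus\{A\}}\neg A')$, the disjunction ranging over all rules $w: A_1\vee\dots\vee A_k\leftarrow\mathit{Body}$ in $\Pi$ with $A\in\{A_1,\dots,A_k\}$. *)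

theory Defs
  imports Complex_Main "HOL-Library.Multiset"
begin

datatype 'a formula =
    Atom 'a | Top | Bot
  | Neg "'a formula"
  | Conj "'a formula" "'a formula"
  | Disj "'a formula" "'a formula"
  | Impl "'a formula" "'a formula"

fun sat :: "'a set \<Rightarrow> 'a formula \<Rightarrow> bool" where
  "sat I (Atom a) = (a \<in> I)"
| "sat I Top = True"
| "sat I Bot = False"
| "sat I (Neg F) = (\<not> sat I F)"
| "sat I (Conj F G) = (sat I F \<and> sat I G)"
| "sat I (Disj F G) = (sat I F \<or> sat I G)"
| "sat I (Impl F G) = (sat I F \<longrightarrow> sat I G)"

fun unnegated_atoms :: "'a formula \<Rightarrow> 'a set" where
  "unnegated_atoms (Atom a) = {a}"
| "unnegated_atoms Top = {}"
| "unnegated_atoms Bot = {}"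
| "unnegated_atoms (Neg F) = {}"
| "unnegated_atoms (Conj F G) = unnegated_atoms F \<union> unnegated_atoms G"
| "unnegated_atoms (Disj F G) = unnegated_atoms F \<union> unnegated_atoms G"
| "unnegated_atoms (Impl F G) = unnegated_atoms F \<union> unnegated_atoms G"

definition negative :: "'a formula \<Rightarrow> bool" where
  "negative F \<longleftrightarrow> unnegated_atoms F = {}"

definition BigConj :: "'a formula list \<Rightarrow> 'a formula" where
  "BigConj Fs = foldr Conj Fs Top"

definition BigDisj :: "'a formula list \<Rightarrow> 'a formula" where
  "BigDisj Fs = foldr Disj Fs Bot"

text \<open>Some enumeration of a finite set (the order is irrelevant semantically).\<close>
definition enum_set :: "'b set \<Rightarrow> 'b list" where
  "enum_set S = (SOME xs. set xs = S \<and> distinct xs)"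

text \<open>A rule  A1 \<or> ... \<or> Ak \<leftarrow> B \<and> N : head atoms, positive body atoms, negative formula N.\<close>
datatype 'a rule = Rule (head: "'a list") (pbody: "'a list") (nbody: "'a formula")

definition body_formula :: "'a rule \<Rightarrow> 'a formula" where
  "body_formula R = Conj (BigConj (map Atom (pbody R))) (nbody R)"

definition rule_formula :: "'a rule \<Rightarrow> 'a formula" where
  "rule_formula R = Impl (body_formula R) (BigDisj (map Atom (head R)))"

definition rule_sat :: "'a set \<Rightarrow> 'a rule \<Rightarrow> bool" where
  "rule_sat I R \<longleftrightarrow> sat I (rule_formula R)"

text \<open>Positive (reduct) rules: head atoms and body atoms.\<close>
definition pos_rule_sat :: "'a set \<Rightarrow> 'a list \<times> 'a list \<Rightarrow> bool" where
  "pos_rule_sat J r \<longleftrightarrow> (set (snd r) \<subseteq> J \<longrightarrow> (\<exists>a\<in>set (fst r). a \<in> J))"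

definition reduct :: "'a rule set \<Rightarrow> 'a set \<Rightarrow> ('a list \<times> 'a list) set" where
  "reduct P I = {(head R, pbody R) | R. R \<in> P \<and> sat I (nbody R)}"

definition stable_model :: "'a rule set \<Rightarrow> 'a set \<Rightarrow> bool" where
  "stable_model P I \<longleftrightarrow>
     (\<forall>r\<in>reduct P I. pos_rule_sat I r) \<and>
     (\<forall>J. J \<subset> I \<longrightarrow> \<not> (\<forall>r\<in>reduct P I. pos_rule_sat J r))"

datatype weight = Soft real | Hard

fun wval :: "real \<Rightarrow> weight \<Rightarrow> real" where
  "wval \<alpha> (Soft r) = r"
| "wval \<alpha> Hard = \<alpha>"

type_synonym 'a lpmln = "(weight \<times> 'a rule) set"

definition lpmln_program :: "'a lpmln \<Rightarrow> bool" where
  "lpmln_program \<Pi> \<longleftrightarrow> finite \<Pi> \<and> (\<forall>(w, R)\<in>\<Pi>. negative (nbody R))"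

definition unweighted :: "'a lpmln \<Rightarrow> 'a rule set" where
  "unweighted \<Pi> = snd ` \<Pi>"

definition sat_part :: "'a lpmln \<Rightarrow> 'a set \<Rightarrow> 'a lpmln" where
  "sat_part \<Pi> I = {(w, R) \<in> \<Pi>. rule_sat I R}"

definition hard_part :: "'a lpmln \<Rightarrow> 'a lpmln" where
  "hard_part \<Pi> = {(w, R) \<in> \<Pi>. w = Hard}"

definition SM :: "'a lpmln \<Rightarrow> 'a set set" where
  "SM \<Pi> = {I. stable_model (unweighted (sat_part \<Pi> I)) I}"

definition SM' :: "'a lpmln \<Rightarrow> 'a set set" where
  "SM' \<Pi> = {I. stable_model (unweighted (sat_part \<Pi> I)) I \<and>
               (\<forall>R\<in>unweighted (hard_part \<Pi>). rule_sat I R)}"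

definition W_lpmln :: "'a lpmln \<Rightarrow> real \<Rightarrow> 'a set \<Rightarrow> real" where
  "W_lpmln \<Pi> \<alpha> I =
     (if I \<in> SM \<Pi> then exp (\<Sum>(w, R)\<in>sat_part \<Pi> I. wval \<alpha> w) else 0)"

definition P_lpmln :: "'a lpmln \<Rightarrow> 'a set \<Rightarrow> real" where
  "P_lpmln \<Pi> I = Lim at_top (\<lambda>\<alpha>. W_lpmln \<Pi> \<alpha> I / (\<Sum>J\<in>SM \<Pi>. W_lpmln \<Pi> \<alpha> J))"

definition tight :: "'a lpmln \<Rightarrow> bool" where
  "tight \<Pi> \<longleftrightarrow> acyclic {(a, b). \<exists>R\<in>unweighted \<Pi>. a \<in> set (head R) \<and> b \<in> set (pbody R)}"

type_synonym 'a mln = "(weight \<times> 'a formula) multiset"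

definition W_mln :: "'a mln \<Rightarrow> real \<Rightarrow> 'a set \<Rightarrow> real" where
  "W_mln L \<alpha> I = exp (\<Sum>\<^sub># (image_mset (\<lambda>(w, F). wval \<alpha> w) (filter_mset (\<lambda>(w, F). sat I F) L)))"

definition P_mln :: "'a mln \<Rightarrow> 'a set \<Rightarrow> real" where
  "P_mln L I = Lim at_top (\<lambda>\<alpha>. W_mln L \<alpha> I / (\<Sum>J\<in>(UNIV :: 'a set set). W_mln L \<alpha> J))"

definition completion_formula :: "'a lpmln \<Rightarrow> 'a \<Rightarrow> 'a formula" where
  "completion_formula \<Pi> a =
     Impl (Atom a)
       (BigDisj (map (\<lambda>(w, R). Conj (body_formula R)
                                    (BigConj (map (\<lambda>a'. Neg (Atom a')) (filter (\<lambda>a'. a' \<noteq> a) (head R)))))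
                     (enum_set {(w, R) \<in> \<Pi>. a \<in> set (head R)})))"

definition Comp :: "'a lpmln \<Rightarrow> 'a mln" where
  "Comp \<Pi> = image_mset (\<lambda>(w, R). (w, rule_formula R)) (mset_set \<Pi>)
           + image_mset (\<lambda>a. (Hard, completion_formula \<Pi> a)) (mset_set UNIV)"

end

theory Submission
  imports Defs
begin

lemma sat_BigConj: "sat I (BigConj Fs) \<longleftrightarrow> (\<forall>F\<in>set Fs. sat I F)"
  unfolding BigConj_def by (induction Fs) auto

lemma sat_BigDisj: "sat I (BigDisj Fs) \<longleftrightarrow> (\<exists>F\<in>set Fs. sat I F)"
  unfolding BigDisj_def by (induction Fs) auto

lemma set_enum_set: "finite S \<Longrightarrow> set (enum_set S) = S"
  unfolding enum_set_def
  by (metis (mono_tags, lifting) finite_distinct_list someI_ex)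

lemma sat_body: "sat I (body_formula R) \<longleftrightarrow> set (pbody R) \<subseteq> I \<and> sat I (nbody R)"
  unfolding body_formula_def by (auto simp: sat_BigConj)

lemma rule_sat_iff: "rule_sat I R \<longleftrightarrow> (set (pbody R) \<subseteq> I \<and> sat I (nbody R) \<longrightarrow> (\<exists>a\<in>set (head R). a \<in> I))"
  unfolding rule_sat_def rule_formula_def by (auto simp: sat_body sat_BigDisj)

definition supp :: "'a lpmln \<Rightarrow> 'a set \<Rightarrow> 'a \<Rightarrow> bool" where
  "supp \<Pi> I a \<longleftrightarrow> (\<exists>(w,R)\<in>\<Pi>. a \<in> set (head R) \<and> set (pbody R) \<subseteq> I \<and> sat I (nbody R) \<and>
      (\<forall>a'\<in>set (head R). a' \<noteq> a \<longrightarrow> a' \<notin> I))"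

lemma sat_comp: assumes "finite \<Pi>"
  shows "sat I (completion_formula \<Pi> a) \<longleftrightarrow> (a \<in> I \<longrightarrow> supp \<Pi> I a)"
proof -
  have fin: "finite {(w, R) \<in> \<Pi>. a \<in> set (head R)}" using assms by (auto intro: finite_subset)
  show ?thesis
    unfolding completion_formula_def supp_def
    by (auto simp: sat_BigDisj sat_BigConj sat_body set_enum_set[OF fin])
qed

lemma stable_iff:
  fixes \<Pi> :: "('a::finite) lpmln"
  assumes "tight \<Pi>"
  shows "stable_model (unweighted (sat_part \<Pi> I)) I \<longleftrightarrow> (\<forall>a\<in>I. supp \<Pi> I a)"
proof
  assume st: "stable_model (unweighted (sat_part \<Pi> I)) I"
  show "\<forall>a\<in>I. supp \<Pi> I a"
  proof (rule ccontr)
    assume "\<not> (\<forall>a\<in>I. supp \<Pi> I a)"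
    then obtain a where aI: "a \<in> I" and ns: "\<not> supp \<Pi> I a" by blast
    let ?J = "I - {a}"
    have "\<forall>r\<in>reduct (unweighted (sat_part \<Pi> I)) I. pos_rule_sat ?J r"
    proof
      fix r assume "r \<in> reduct (unweighted (sat_part \<Pi> I)) I"
      then obtain w R where r: "r = (head R, pbody R)" and wR: "(w,R) \<in> \<Pi>" and rs: "rule_sat I R"
        and nb: "sat I (nbody R)"
        unfolding reduct_def unweighted_def sat_part_def by auto
      show "pos_rule_sat ?J r"
        unfolding pos_rule_sat_def r fst_conv snd_conv
      proof
        assume pb: "set (pbody R) \<subseteq> ?J"
        then obtain b where b: "b \<in> set (head R)" "b \<in> I" using rs nb unfolding rule_sat_iff by auto
        show "\<exists>a\<in>set (head R). a \<in> ?J"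
        proof (rule ccontr)
          assume nt: "\<not> (\<exists>a\<in>set (head R). a \<in> ?J)"
          hence "\<forall>a'\<in>set (head R). a' \<noteq> a \<longrightarrow> a' \<notin> I" by auto
          moreover have "a \<in> set (head R)" using b nt by auto
          ultimately have "supp \<Pi> I a" unfolding supp_def using wR pb nb by auto
          thus False using ns by simp
        qed
      qed
    qed
    moreover have "?J \<subset> I" using aI by auto
    ultimately show False using st unfolding stable_model_def by blast
  qed
next
  assume sp: "\<forall>a\<in>I. supp \<Pi> I a"
  let ?P = "unweighted (sat_part \<Pi> I)"
  have m: "\<forall>r\<in>reduct ?P I. pos_rule_sat I r"
    unfolding reduct_def unweighted_def sat_part_def pos_rule_sat_def
    by (auto simp: rule_sat_iff)
  have "\<not> (\<forall>r\<in>reduct ?P I. pos_rule_sat J r)" if JI: "J \<subset> I" for J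
  proof
    assume mJ: "\<forall>r\<in>reduct ?P I. pos_rule_sat J r"
    let ?r = "{(a, b). \<exists>R\<in>unweighted \<Pi>. a \<in> set (head R) \<and> b \<in> set (pbody R)}"
    have "wf (?r\<inverse>)"
      using assms unfolding tight_def by (intro finite_acyclic_wf_converse[OF finite])
    moreover obtain x where "x \<in> I - J" using JI by auto
    ultimately obtain a where aD: "a \<in> I - J" and amin: "\<And>y. (y, a) \<in> ?r\<inverse> \<Longrightarrow> y \<notin> I - J"
      by (rule wfE_min) blast
    from sp aD obtain w R where wR: "(w,R) \<in> \<Pi>" and ah: "a \<in> set (head R)" and pb: "set (pbody R) \<subseteq> I"
      and nb: "sat I (nbody R)" and oth: "\<forall>a'\<in>set (head R). a' \<noteq> a \<longrightarrow> a' \<notin> I"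
      unfolding supp_def by blast
    have Ru: "R \<in> unweighted \<Pi>" using wR unfolding unweighted_def by force
    have pbJ: "set (pbody R) \<subseteq> J"
    proof
      fix b assume "b \<in> set (pbody R)"
      hence "(b, a) \<in> ?r\<inverse>" using Ru ah by auto
      thus "b \<in> J" using amin pb \<open>b \<in> set (pbody R)\<close> by blast
    qed
    have "rule_sat I R" using ah aD unfolding rule_sat_iff by auto
    hence "R \<in> ?P" using wR unfolding unweighted_def sat_part_def by force
    hence "(head R, pbody R) \<in> reduct ?P I" using nb unfolding reduct_def by auto
    with mJ pbJ obtain c where "c \<in> set (head R)" "c \<in> J" unfolding pos_rule_sat_def by fastforce
    thus False using oth aD JI by auto
  qed
  thus "stable_model ?P I" using m unfolding stable_model_def by blast
qed


lemma sum_mset_filter: "sum_mset (image_mset f (filter_mset P M)) = sum_mset (image_mset (\<lambda>x. if P x then f x else 0) M)"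
  by (induction M) auto

definition sw :: "'a lpmln \<Rightarrow> 'a set \<Rightarrow> real" where
  "sw \<Pi> J = (\<Sum>x\<in>sat_part \<Pi> J. wval 0 (fst x))"
definition hc :: "'a lpmln \<Rightarrow> 'a set \<Rightarrow> nat" where
  "hc \<Pi> J = card {x\<in>sat_part \<Pi> J. fst x = Hard}"
definition Hc :: "'a lpmln \<Rightarrow> nat" where
  "Hc \<Pi> = card {x\<in>\<Pi>. fst x = Hard}"
definition cc :: "'a lpmln \<Rightarrow> 'a set \<Rightarrow> nat" where
  "cc \<Pi> J = card {a. sat J (completion_formula \<Pi> a)}"

lemma sat_part_eq: "sat_part \<Pi> J = {x\<in>\<Pi>. rule_sat J (snd x)}"
  unfolding sat_part_def by auto

lemma wval_split: "wval \<alpha> w = wval 0 w + (if w = Hard then \<alpha> else 0)"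
  by (cases w) auto

lemma sum_split: assumes "finite \<Pi>"
  shows "(\<Sum>(w, R)\<in>sat_part \<Pi> J. wval \<alpha> w) = sw \<Pi> J + real (hc \<Pi> J) * \<alpha>"
proof -
  have fin: "finite (sat_part \<Pi> J)" using assms unfolding sat_part_eq by auto
  have "(\<Sum>(w, R)\<in>sat_part \<Pi> J. wval \<alpha> w) = (\<Sum>x\<in>sat_part \<Pi> J. wval 0 (fst x) + (if fst x = Hard then \<alpha> else 0))"
    by (subst wval_split) (simp add: split_def)
  also have "\<dots> = sw \<Pi> J + (\<Sum>x\<in>sat_part \<Pi> J. (if fst x = Hard then \<alpha> else 0))"
    unfolding sw_def sum.distrib ..
  also have "(\<Sum>x\<in>sat_part \<Pi> J. (if fst x = Hard then \<alpha> else 0)) = real (hc \<Pi> J) * \<alpha>"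
    unfolding hc_def using fin by (simp add: sum.inter_filter[symmetric])
  finally show ?thesis .
qed

lemma W_mln_eq:
  fixes \<Pi> :: "('a::finite) lpmln"
  assumes "finite \<Pi>"
  shows "W_mln (Comp \<Pi>) \<alpha> J = exp (sw \<Pi> J + real (hc \<Pi> J) * \<alpha> + real (cc \<Pi> J) * \<alpha>)"
proof -
  have "W_mln (Comp \<Pi>) \<alpha> J = exp ((\<Sum>x\<in>\<Pi>. if rule_sat J (snd x) then wval \<alpha> (fst x) else 0)
      + (\<Sum>a\<in>UNIV. if sat J (completion_formula \<Pi> a) then \<alpha> else 0))"
    unfolding W_mln_def Comp_def sum_mset_filter
    by (simp add: sum_unfold_sum_mset multiset.map_comp o_def rule_sat_def case_prod_beta cong: if_cong)
  also have "(\<Sum>x\<in>\<Pi>. if rule_sat J (snd x) then wval \<alpha> (fst x) else 0) = (\<Sum>(w, R)\<in>sat_part \<Pi> J. wval \<alpha> w)"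
    unfolding sat_part_eq using assms by (simp add: sum.inter_filter split_def)
  also have "(\<Sum>a\<in>UNIV. if sat J (completion_formula \<Pi> a) then \<alpha> else 0) = real (cc \<Pi> J) * \<alpha>"
    unfolding cc_def by (simp add: sum.If_cases)
  finally show ?thesis using sum_split[OF assms] by simp
qed

lemma SM_iff:
  fixes \<Pi> :: "('a::finite) lpmln"
  assumes "finite \<Pi>" "tight \<Pi>"
  shows "J \<in> SM \<Pi> \<longleftrightarrow> cc \<Pi> J = card (UNIV::'a set)"
proof -
  have "J \<in> SM \<Pi> \<longleftrightarrow> (\<forall>a. sat J (completion_formula \<Pi> a))"
    unfolding SM_def using stable_iff[OF assms(2)] sat_comp[OF assms(1)] by auto
  also have "\<dots> \<longleftrightarrow> {a. sat J (completion_formula \<Pi> a)} = UNIV" by auto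
  also have "\<dots> \<longleftrightarrow> cc \<Pi> J = card (UNIV::'a set)" unfolding cc_def
    by (metis card_subset_eq finite subset_UNIV)
  finally show ?thesis .
qed

lemma cc_le: "cc \<Pi> (J::'a::finite set) \<le> card (UNIV::'a set)"
  unfolding cc_def by (rule card_mono) auto

lemma hc_le: assumes "finite \<Pi>" shows "hc \<Pi> J \<le> Hc \<Pi>"
  unfolding hc_def Hc_def sat_part_eq using assms by (intro card_mono) auto

lemma exp_lim: assumes "k \<le> (0::real)"
  shows "((\<lambda>\<alpha>. exp (s + k * \<alpha>)) \<longlongrightarrow> (if k = 0 then exp s else 0)) at_top"
proof (cases "k = 0")
  case True thus ?thesis by simp
next
  case False
  hence "k < 0" using assms by simp
  have "filterlim (\<lambda>\<alpha>. k * \<alpha>) at_bot at_top"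
    by (rule filterlim_cmult_at_bot_at_top[OF filterlim_ident]) (use \<open>k < 0\<close> in auto)
  hence "filterlim (\<lambda>\<alpha>. s + k * \<alpha>) at_bot at_top"
    using filterlim_tendsto_add_at_bot_iff[OF tendsto_const] by blast
  hence "((\<lambda>\<alpha>. exp (s + k * \<alpha>)) \<longlongrightarrow> 0) at_top"
    using exp_at_bot filterlim_compose by blast
  thus ?thesis using False by simp
qed


theorem theorem3:
  fixes \<Pi> :: "('a::finite) lpmln" and I :: "'a set"
  assumes "lpmln_program \<Pi>"
    and "tight \<Pi>"
    and "SM' \<Pi> \<noteq> {}"
  shows "P_lpmln \<Pi> I = P_mln (Comp \<Pi>) I"
proof -
  have fin: "finite \<Pi>" using assms(1) unfolding lpmln_program_def by simp
  define n where "n = card (UNIV::'a set)"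
  define H where "H = Hc \<Pi>"
  define a where "a J \<alpha> = (if J \<in> SM \<Pi> then exp (sw \<Pi> J + (real (hc \<Pi> J) - real H) * \<alpha>) else 0)" for J \<alpha>
  define b where "b J \<alpha> = exp (sw \<Pi> J + (real (hc \<Pi> J) + real (cc \<Pi> J) - real H - real n) * \<alpha>)" for J \<alpha>
  define A where "A J = (if J \<in> SM \<Pi> \<and> hc \<Pi> J = H then exp (sw \<Pi> J) else 0)" for J
  have SMi: "J \<in> SM \<Pi> \<longleftrightarrow> cc \<Pi> J = n" for J using SM_iff[OF fin assms(2)] n_def by simp
  have hle: "hc \<Pi> J \<le> H" for J using hc_le[OF fin] H_def by simp
  have cle: "cc \<Pi> J \<le> n" for J using cc_le n_def by simp
  have W1: "W_lpmln \<Pi> \<alpha> J = exp (real H * \<alpha>) * a J \<alpha>" for \<alpha> J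
    unfolding W_lpmln_def a_def sum_split[OF fin] by (simp add: exp_add[symmetric] algebra_simps)
  have W2: "W_mln (Comp \<Pi>) \<alpha> J = exp ((real H + real n) * \<alpha>) * b J \<alpha>" for \<alpha> J
    unfolding W_mln_eq[OF fin] b_def by (simp add: exp_add[symmetric] algebra_simps)
  have la: "((a J) \<longlongrightarrow> A J) at_top" for J
  proof (cases "J \<in> SM \<Pi>")
    case True
    have "real (hc \<Pi> J) - real H \<le> 0" using hle[of J] by simp
    from exp_lim[OF this, of "sw \<Pi> J"] show ?thesis
      using True unfolding a_def A_def by (simp add: fun_eq_iff)
  next
    case False thus ?thesis unfolding a_def A_def by simp
  qed
  have lb: "((b J) \<longlongrightarrow> A J) at_top" for J
  proof -
    have "real (hc \<Pi> J) + real (cc \<Pi> J) - real H - real n \<le> 0" using hle[of J] cle[of J] by simp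
    from exp_lim[OF this, of "sw \<Pi> J"] show ?thesis
      unfolding b_def A_def using hle[of J] cle[of J] SMi[of J]
      by (smt (verit, ccfv_SIG) of_nat_eq_iff of_nat_le_iff tendsto_cong)
  qed
  obtain J0 where J0: "J0 \<in> SM' \<Pi>" using assms(3) by blast
  have J0SM: "J0 \<in> SM \<Pi>" using J0 unfolding SM'_def SM_def by simp
  have "{x\<in>sat_part \<Pi> J0. fst x = Hard} = {x\<in>\<Pi>. fst x = Hard}"
    using J0 unfolding SM'_def sat_part_eq unweighted_def hard_part_def by force
  hence hJ0: "hc \<Pi> J0 = H" unfolding hc_def H_def Hc_def by simp
  have Apos: "(\<Sum>J\<in>UNIV. A J) > 0"
  proof -
    have "(\<Sum>J\<in>UNIV. A J) \<ge> A J0"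
      by (rule member_le_sum) (auto simp: A_def)
    moreover have "A J0 > 0" using J0SM hJ0 unfolding A_def by simp
    ultimately show ?thesis by simp
  qed
  have sumSM: "(\<Sum>J\<in>SM \<Pi>. W_lpmln \<Pi> \<alpha> J) = exp (real H * \<alpha>) * (\<Sum>J\<in>UNIV. a J \<alpha>)" for \<alpha>
  proof -
    have "(\<Sum>J\<in>SM \<Pi>. W_lpmln \<Pi> \<alpha> J) = (\<Sum>J\<in>UNIV. W_lpmln \<Pi> \<alpha> J)"
      by (rule sum.mono_neutral_left) (auto simp: W_lpmln_def)
    thus ?thesis unfolding W1 sum_distrib_left .
  qed
  have eq1: "W_lpmln \<Pi> \<alpha> I / (\<Sum>J\<in>SM \<Pi>. W_lpmln \<Pi> \<alpha> J) = a I \<alpha> / (\<Sum>J\<in>UNIV. a J \<alpha>)" for \<alpha>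
    unfolding sumSM by (simp add: W1)
  have eq2: "W_mln (Comp \<Pi>) \<alpha> I / (\<Sum>J\<in>UNIV. W_mln (Comp \<Pi>) \<alpha> J) = b I \<alpha> / (\<Sum>J\<in>UNIV. b J \<alpha>)" for \<alpha>
    unfolding W2 sum_distrib_left[symmetric] by simp
  have T1: "((\<lambda>\<alpha>. a I \<alpha> / (\<Sum>J\<in>UNIV. a J \<alpha>)) \<longlongrightarrow> A I / (\<Sum>J\<in>UNIV. A J)) at_top"
    using Apos by (intro tendsto_divide tendsto_sum la) auto
  have T2: "((\<lambda>\<alpha>. b I \<alpha> / (\<Sum>J\<in>UNIV. b J \<alpha>)) \<longlongrightarrow> A I / (\<Sum>J\<in>UNIV. A J)) at_top"
    using Apos by (intro tendsto_divide tendsto_sum lb) auto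
  have "P_lpmln \<Pi> I = A I / (\<Sum>J\<in>UNIV. A J)"
    unfolding P_lpmln_def eq1 by (rule tendsto_Lim[OF trivial_limit_at_top_linorder T1])
  moreover have "P_mln (Comp \<Pi>) I = A I / (\<Sum>J\<in>UNIV. A J)"
    unfolding P_mln_def eq2 by (rule tendsto_Lim[OF trivial_limit_at_top_linorder T2])
  ultimately show ?thesis by simp
qed

end
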